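(* Suppose there are at least three states ($n\ge3$). If an updating rule respects the Blackwell order for a prior $\mu$ in the relative interior of $\Delta$, then either $\varphi^{\mu}(x)=x$ for all $x\in\Delta$ (Bayes' law), or $\varphi^{\mu}$ is constant on the relative interior of $\Delta$.
   Context: Let $\Theta$ be a finite set of states, $|\Theta|=n$, and $\Delta=\Delta(\Theta)$ the simplex of beliefs on $\Theta$. An experiment is a map $\pi:\Theta\to\Delta(S)$ with $S$ finite; with prior $\mu$ it induces the Bayesian distribution over posteriors $\rho_B$, a finitely supported distribution on $\Delta$ with mean $\mu$ (every such distribution arises from some experiment). Blackwell order: $\pi\succeq\pi'$ iff $\rho_B'$ is a mean-preserving contraction of $\rho_B$. An updating rule is given, for each prior $\mu$, by a distortion function $\varphi^{\mu}:\Delta\to\Delta$: when the Bayesian posterior is $x$, the decision maker holds belief $\varphi^{\mu}(x)$. For a compact action set $A$, continuous $u:A\times\Theta\to\mathbb{R}$, and consistent choice $a^*:\Delta\to A$ (i.e. $a^*(y)\in\arg\max_{a}\mathbb{E}_y u(a,\theta)$ for all $y$), let $W(x)=\mathbb{E}_x u(a^*(\varphi^{\mu}(x)),\theta)$. The rule respects the Blackwell order for $\mu$ if for all such $A,u,a^*$ and all experiments $\pi\succeq\pi'$ with Bayesian distributions $\rho_B,\rho_B'$, $\mathbb{E}_{\rho_B}W\ge\mathbb{E}_{\rho_B'}W$. *)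

theory Defs
  imports "HOL-Analysis.Analysis"
begin

definition belief_simplex :: "('a::finite \<Rightarrow> real) set" where
  "belief_simplex = {x. (\<forall>t. 0 \<le> x t) \<and> sum x UNIV = 1}"

definition rel_int_simplex :: "('a::finite \<Rightarrow> real) set" where
  "rel_int_simplex = {x. (\<forall>t. 0 < x t) \<and> sum x UNIV = 1}"

text \<open>Experiments with a finite set of signals (signals encoded as naturals):
  pi t s is the probability of signal s in state t.\<close>
definition sig_support :: "('a \<Rightarrow> nat \<Rightarrow> real) \<Rightarrow> nat set" where
  "sig_support \<pi> = {s. \<exists>t. \<pi> t s \<noteq> 0}"

definition is_experiment :: "('a::finite \<Rightarrow> nat \<Rightarrow> real) \<Rightarrow> bool" where
  "is_experiment \<pi> \<longleftrightarrow> (\<forall>t s. 0 \<le> \<pi> t s) \<and> finite (sig_support \<pi>)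
      \<and> (\<forall>t. sum (\<pi> t) (sig_support \<pi>) = 1)"

definition sprob :: "('a::finite \<Rightarrow> real) \<Rightarrow> ('a \<Rightarrow> nat \<Rightarrow> real) \<Rightarrow> nat \<Rightarrow> real" where
  "sprob \<mu> \<pi> s = (\<Sum>t\<in>UNIV. \<mu> t * \<pi> t s)"

definition posterior :: "('a::finite \<Rightarrow> real) \<Rightarrow> ('a \<Rightarrow> nat \<Rightarrow> real) \<Rightarrow> nat \<Rightarrow> ('a \<Rightarrow> real)" where
  "posterior \<mu> \<pi> s = (\<lambda>t. \<mu> t * \<pi> t s / sprob \<mu> \<pi> s)"

text \<open>Bayesian distribution over posteriors, as a finitely supported weight
  function on beliefs.\<close>
definition bayes_dist :: "('a::finite \<Rightarrow> real) \<Rightarrow> ('a \<Rightarrow> nat \<Rightarrow> real) \<Rightarrow> ('a \<Rightarrow> real) \<Rightarrow> real" where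
  "bayes_dist \<mu> \<pi> x =
     sum (sprob \<mu> \<pi>) {s \<in> sig_support \<pi>. sprob \<mu> \<pi> s \<noteq> 0 \<and> posterior \<mu> \<pi> s = x}"

definition fsupp :: "('b \<Rightarrow> real) \<Rightarrow> 'b set" where
  "fsupp \<rho> = {x. \<rho> x \<noteq> 0}"

definition fexp :: "('b \<Rightarrow> real) \<Rightarrow> ('b \<Rightarrow> real) \<Rightarrow> real" where
  "fexp \<rho> f = (\<Sum>x\<in>fsupp \<rho>. \<rho> x * f x)"

text \<open>rho' is a mean-preserving contraction of rho: there is a joint distribution K
  (K y x = mass on (y,x)) with marginals rho' and rho such that, conditional on y,
  the mean of x equals y.\<close>
definition mpc :: "(('a::finite \<Rightarrow> real) \<Rightarrow> real) \<Rightarrow> (('a \<Rightarrow> real) \<Rightarrow> real) \<Rightarrow> bool" where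
  "mpc \<rho>' \<rho> \<longleftrightarrow> (\<exists>K :: ('a \<Rightarrow> real) \<Rightarrow> ('a \<Rightarrow> real) \<Rightarrow> real.
      (\<forall>y x. 0 \<le> K y x)
    \<and> (\<forall>x. (\<Sum>y\<in>fsupp \<rho>'. K y x) = \<rho> x)
    \<and> (\<forall>y\<in>fsupp \<rho>'. (\<Sum>x\<in>fsupp \<rho>. K y x) = \<rho>' y)
    \<and> (\<forall>y\<in>fsupp \<rho>'. \<forall>t. (\<Sum>x\<in>fsupp \<rho>. K y x * x t) = \<rho>' y * y t))"

definition blackwell_geq :: "('a::finite \<Rightarrow> real) \<Rightarrow> ('a \<Rightarrow> nat \<Rightarrow> real) \<Rightarrow> ('a \<Rightarrow> nat \<Rightarrow> real) \<Rightarrow> bool" where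
  "blackwell_geq \<mu> \<pi> \<pi>' \<longleftrightarrow> mpc (bayes_dist \<mu> \<pi>') (bayes_dist \<mu> \<pi>)"

definition consistent_choice ::
  "'b set \<Rightarrow> ('b \<Rightarrow> 'a::finite \<Rightarrow> real) \<Rightarrow> (('a \<Rightarrow> real) \<Rightarrow> 'b) \<Rightarrow> bool" where
  "consistent_choice A u a \<longleftrightarrow> (\<forall>y\<in>belief_simplex. a y \<in> A \<and>
      (\<forall>b\<in>A. (\<Sum>t\<in>UNIV. y t * u b t) \<le> (\<Sum>t\<in>UNIV. y t * u (a y) t)))"

text \<open>The rule phi (phi mu is the distortion function for prior mu) respects the
  Blackwell order for mu.  Actions range over compact subsets of the space
  'a => real (product topology).\<close>
definition respects_blackwell ::
  "(('a::finite \<Rightarrow> real) \<Rightarrow> ('a \<Rightarrow> real) \<Rightarrow> ('a \<Rightarrow> real)) \<Rightarrow> ('a \<Rightarrow> real) \<Rightarrow> bool" where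
  "respects_blackwell \<phi> \<mu> \<longleftrightarrow>
    (\<forall>(A :: ('a \<Rightarrow> real) set) (u :: ('a \<Rightarrow> real) \<Rightarrow> 'a \<Rightarrow> real) a.
       compact A \<and> (\<forall>t. continuous_on A (\<lambda>b. u b t)) \<and> consistent_choice A u a \<longrightarrow>
       (\<forall>\<pi> \<pi>'. is_experiment \<pi> \<and> is_experiment \<pi>' \<and> blackwell_geq \<mu> \<pi> \<pi>' \<longrightarrow>
          fexp (bayes_dist \<mu> \<pi>) (\<lambda>x. \<Sum>t\<in>UNIV. x t * u (a (\<phi> \<mu> x)) t)
          \<ge> fexp (bayes_dist \<mu> \<pi>') (\<lambda>x. \<Sum>t\<in>UNIV. x t * u (a (\<phi> \<mu> x)) t)))"

end

theory Submission
  imports Defs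
begin


definition mk_exp :: "('a::finite \<Rightarrow> real) \<Rightarrow> (nat \<Rightarrow> real) \<Rightarrow> (nat \<Rightarrow> 'a \<Rightarrow> real) \<Rightarrow> nat \<Rightarrow> 'a \<Rightarrow> nat \<Rightarrow> real" where
  "mk_exp \<mu> c x k = (\<lambda>t s. if s < k then c s * x s t / \<mu> t else 0)"

lemma simplex_le1: "x \<in> belief_simplex \<Longrightarrow> x t \<le> (1::real)"
proof -
  assume "x \<in> belief_simplex"
  then have "\<forall>t. 0 \<le> x t" "sum x UNIV = 1" by (auto simp: belief_simplex_def)
  then show ?thesis by (metis UNIV_I finite member_le_sum)
qed

lemma simplex_nz: "x \<in> belief_simplex \<Longrightarrow> \<exists>t. x t \<noteq> 0"
proof (rule ccontr)
  assume "x \<in> belief_simplex" "\<not> (\<exists>t. x t \<noteq> 0)"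
  then have "sum x UNIV = 0" "sum x UNIV = 1" by (auto simp: belief_simplex_def)
  then show False by simp
qed

locale expc =
  fixes \<mu> :: "'a::finite \<Rightarrow> real" and c :: "nat \<Rightarrow> real" and x :: "nat \<Rightarrow> 'a \<Rightarrow> real" and k :: nat
  assumes mu: "\<mu> \<in> rel_int_simplex"
    and cpos: "\<And>s. s < k \<Longrightarrow> c s > 0"
    and xs: "\<And>s. s < k \<Longrightarrow> x s \<in> belief_simplex"
    and mean: "\<And>t. (\<Sum>s<k. c s * x s t) = \<mu> t"
begin

abbreviation "\<pi> \<equiv> mk_exp \<mu> c x k"

lemma mupos: "\<mu> t > 0" using mu by (auto simp: rel_int_simplex_def)

lemma supp: "sig_support \<pi> = {..<k}"
proof -
  have "s \<in> sig_support \<pi>" if sk: "s < k" for s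
  proof -
    obtain t where "x s t \<noteq> 0" using simplex_nz xs sk by blast
    then show ?thesis using sk cpos[OF sk] mupos[of t]
      by (auto simp: sig_support_def mk_exp_def)
  qed
  moreover have "s < k" if "s \<in> sig_support \<pi>" for s
    using that by (auto simp: sig_support_def mk_exp_def split: if_splits)
  ultimately show ?thesis by auto
qed

lemma is_exp: "is_experiment \<pi>"
proof -
  have nn: "0 \<le> \<pi> t s" for t s
  proof (cases "s < k")
    case True
    then have "0 \<le> x s t" using xs[OF True] by (auto simp: belief_simplex_def)
    then show ?thesis using True cpos[OF True] mupos[of t] by (auto simp: mk_exp_def)
  qed (auto simp: mk_exp_def)
  have "sum (\<pi> t) {..<k} = 1" for t
  proof -
    have "sum (\<pi> t) {..<k} = (\<Sum>s<k. c s * x s t) / \<mu> t"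
      by (simp add: mk_exp_def sum_divide_distrib)
    also have "\<dots> = 1" using mean[of t] mupos[of t] by simp
    finally show ?thesis .
  qed
  then show ?thesis using nn by (simp add: is_experiment_def supp)
qed

lemma sprob_eq: "s < k \<Longrightarrow> sprob \<mu> \<pi> s = c s"
proof -
  assume s: "s < k"
  have "sprob \<mu> \<pi> s = (\<Sum>t\<in>UNIV. c s * x s t)"
    unfolding sprob_def mk_exp_def
  proof (intro sum.cong refl)
    fix t show "\<mu> t * (if s < k then c s * x s t / \<mu> t else 0) = c s * x s t"
      using s mupos[of t] by simp
  qed
  also have "\<dots> = c s" using xs[OF s] by (simp add: sum_distrib_left[symmetric] belief_simplex_def)
  finally show ?thesis .
qed

lemma post_eq: "s < k \<Longrightarrow> posterior \<mu> \<pi> s = x s"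
proof -
  assume s: "s < k"
  have "posterior \<mu> \<pi> s t = x s t" for t
    using sprob_eq[OF s] cpos[OF s] mupos[of t] s by (simp add: posterior_def mk_exp_def)
  then show ?thesis by auto
qed

lemma bd_eq: "bayes_dist \<mu> \<pi> y = sum c {s. s < k \<and> x s = y}"
proof -
  have "{s \<in> sig_support \<pi>. sprob \<mu> \<pi> s \<noteq> 0 \<and> posterior \<mu> \<pi> s = y} = {s. s < k \<and> x s = y}"
    using sprob_eq post_eq cpos by (force simp: supp)
  then show ?thesis unfolding bayes_dist_def
    by (metis (no_types, lifting) mem_Collect_eq sprob_eq sum.cong)
qed

lemma fsupp_eq: "fsupp (bayes_dist \<mu> \<pi>) = x ` {..<k}"
proof -
  have "bayes_dist \<mu> \<pi> y \<noteq> 0 \<longleftrightarrow> y \<in> x ` {..<k}" for y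
  proof
    assume "bayes_dist \<mu> \<pi> y \<noteq> 0"
    then have "{s. s < k \<and> x s = y} \<noteq> {}" by (metis bd_eq sum.empty)
    then show "y \<in> x ` {..<k}" by blast
  next
    assume "y \<in> x ` {..<k}"
    then obtain s0 where s0: "s0 < k" "x s0 = y" by auto
    have "0 < sum c {s. s < k \<and> x s = y}"
      by (rule sum_pos) (use s0 cpos in auto)
    then show "bayes_dist \<mu> \<pi> y \<noteq> 0" by (simp add: bd_eq)
  qed
  then show ?thesis by (auto simp: fsupp_def)
qed

lemma fexp_eq: "fexp (bayes_dist \<mu> \<pi>) W = (\<Sum>s<k. c s * W (x s))"
proof -
  have "fexp (bayes_dist \<mu> \<pi>) W = (\<Sum>y\<in>x ` {..<k}. sum c {s. s < k \<and> x s = y} * W y)"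
    by (simp add: fexp_def fsupp_eq bd_eq)
  also have "\<dots> = (\<Sum>y\<in>x ` {..<k}. (\<Sum>s\<in>{s. s \<in> {..<k} \<and> x s = y}. c s * W (x s)))"
    by (intro sum.cong refl) (auto simp: sum_distrib_right)
  also have "\<dots> = (\<Sum>s<k. c s * W (x s))"
    by (rule sum.image_gen[symmetric]) simp
  finally show ?thesis .
qed

end


lemma garble:
  assumes E: "expc \<mu> c x k" and E': "expc \<mu> c' x' k'"
    and Jnn: "\<And>s' s. 0 \<le> J s' s"
    and J1: "\<And>s. s < k \<Longrightarrow> (\<Sum>s'<k'. J s' s) = c s"
    and J2: "\<And>s'. s' < k' \<Longrightarrow> (\<Sum>s<k. J s' s) = c' s'"
    and J3: "\<And>s' t. s' < k' \<Longrightarrow> (\<Sum>s<k. J s' s * x s t) = c' s' * x' s' t"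
  shows "blackwell_geq \<mu> (mk_exp \<mu> c x k) (mk_exp \<mu> c' x' k')"
proof -
  interpret e: expc \<mu> c x k by (rule E)
  interpret e': expc \<mu> c' x' k' by (rule E')
  define K where "K y z = (\<Sum>s'\<in>{s'. s' \<in> {..<k'} \<and> x' s' = y}. \<Sum>s\<in>{s. s \<in> {..<k} \<and> x s = z}. J s' s)" for y z
  have K1: "0 \<le> K y z" for y z unfolding K_def by (intro sum_nonneg Jnn)
  have K2: "(\<Sum>y\<in>fsupp (bayes_dist \<mu> e'.\<pi>). K y z) = bayes_dist \<mu> e.\<pi> z" for z
  proof -
    have "(\<Sum>y\<in>fsupp (bayes_dist \<mu> e'.\<pi>). K y z) = (\<Sum>s'<k'. \<Sum>s\<in>{s. s \<in> {..<k} \<and> x s = z}. J s' s)"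
      unfolding e'.fsupp_eq K_def by (rule sum.image_gen[symmetric]) simp
    also have "\<dots> = (\<Sum>s\<in>{s. s \<in> {..<k} \<and> x s = z}. \<Sum>s'<k'. J s' s)" by (rule sum.swap)
    also have "\<dots> = (\<Sum>s\<in>{s. s \<in> {..<k} \<and> x s = z}. c s)" by (intro sum.cong refl) (auto simp: J1)
    finally show ?thesis by (simp add: e.bd_eq)
  qed
  have K3: "(\<Sum>z\<in>fsupp (bayes_dist \<mu> e.\<pi>). K y z * z t) = bayes_dist \<mu> e'.\<pi> y * y t" for y t
  proof -
    have "(\<Sum>z\<in>fsupp (bayes_dist \<mu> e.\<pi>). K y z * z t)
        = (\<Sum>z\<in>x ` {..<k}. \<Sum>s'\<in>{s'. s' \<in> {..<k'} \<and> x' s' = y}. \<Sum>s\<in>{s. s \<in> {..<k} \<and> x s = z}. J s' s * x s t)"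
      unfolding e.fsupp_eq K_def sum_distrib_right by (intro sum.cong refl) auto
    also have "\<dots> = (\<Sum>s'\<in>{s'. s' \<in> {..<k'} \<and> x' s' = y}. \<Sum>z\<in>x ` {..<k}. \<Sum>s\<in>{s. s \<in> {..<k} \<and> x s = z}. J s' s * x s t)"
      by (rule sum.swap)
    also have "\<dots> = (\<Sum>s'\<in>{s'. s' \<in> {..<k'} \<and> x' s' = y}. \<Sum>s<k. J s' s * x s t)"
      by (intro sum.cong refl sum.image_gen[symmetric]) simp
    also have "\<dots> = (\<Sum>s'\<in>{s'. s' \<in> {..<k'} \<and> x' s' = y}. c' s' * y t)"
      by (intro sum.cong refl) (auto simp: J3)
    finally show ?thesis by (simp add: e'.bd_eq sum_distrib_right)
  qed
  have K4: "(\<Sum>z\<in>fsupp (bayes_dist \<mu> e.\<pi>). K y z) = bayes_dist \<mu> e'.\<pi> y" for y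
  proof -
    have "(\<Sum>z\<in>fsupp (bayes_dist \<mu> e.\<pi>). K y z)
        = (\<Sum>z\<in>x ` {..<k}. \<Sum>s'\<in>{s'. s' \<in> {..<k'} \<and> x' s' = y}. \<Sum>s\<in>{s. s \<in> {..<k} \<and> x s = z}. J s' s)"
      unfolding e.fsupp_eq K_def by simp
    also have "\<dots> = (\<Sum>s'\<in>{s'. s' \<in> {..<k'} \<and> x' s' = y}. \<Sum>z\<in>x ` {..<k}. \<Sum>s\<in>{s. s \<in> {..<k} \<and> x s = z}. J s' s)"
      by (rule sum.swap)
    also have "\<dots> = (\<Sum>s'\<in>{s'. s' \<in> {..<k'} \<and> x' s' = y}. \<Sum>s<k. J s' s)"
      by (intro sum.cong refl sum.image_gen[symmetric]) simp
    also have "\<dots> = (\<Sum>s'\<in>{s'. s' \<in> {..<k'} \<and> x' s' = y}. c' s')"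
      by (intro sum.cong refl) (auto simp: J2)
    finally show ?thesis by (simp add: e'.bd_eq)
  qed
  show ?thesis unfolding blackwell_geq_def mpc_def
    by (rule exI[of _ K]) (use K1 K2 K3 K4 in auto)
qed


lemma lt2: "{..<2::nat} = {0,1}" by auto
lemma lt3: "{..<3::nat} = {0,1,2}" by auto

lemma split_mu:
  assumes mu: "\<mu> \<in> rel_int_simplex" and w: "w \<in> belief_simplex"
  obtains \<alpha> z where "0 < \<alpha>" "\<alpha> < 1" "z \<in> belief_simplex" "\<And>t. \<alpha> * w t + (1 - \<alpha>) * z t = \<mu> t"
proof -
  define m where "m = Min (range \<mu>)"
  have mpos: "0 < m" unfolding m_def using mu by (subst Min_gr_iff) (auto simp: rel_int_simplex_def)
  have mle: "m \<le> \<mu> t" for t unfolding m_def by (rule Min_le) auto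
  have mu1: "\<mu> t \<le> 1" for t using simplex_le1[of \<mu> t] mu
    by (auto simp: rel_int_simplex_def belief_simplex_def less_imp_le)
  define \<alpha> where "\<alpha> = m / 2"
  have a0: "0 < \<alpha>" and a1: "\<alpha> < 1" using mpos mle[of undefined] mu1[of undefined] by (auto simp: \<alpha>_def)
  define z where "z t = (\<mu> t - \<alpha> * w t) / (1 - \<alpha>)" for t
  have "0 \<le> z t" for t
  proof -
    have "\<alpha> * w t \<le> \<alpha> * 1" using simplex_le1[OF w, of t] a0 by (intro mult_left_mono) auto
    moreover have "\<alpha> \<le> \<mu> t" using mle[of t] mpos by (simp add: \<alpha>_def)
    ultimately have "\<alpha> * w t \<le> \<mu> t" by linarith
    then show ?thesis using a1 by (simp add: z_def)
  qed
  moreover have "sum z UNIV = 1"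
  proof -
    have "sum z UNIV = (\<Sum>t\<in>UNIV. \<mu> t - \<alpha> * w t) / (1 - \<alpha>)"
      by (simp add: z_def sum_divide_distrib)
    also have "\<dots> = (sum \<mu> UNIV - \<alpha> * sum w UNIV) / (1 - \<alpha>)"
      by (simp add: sum_subtractf sum_distrib_left)
    finally show ?thesis using mu w a1 by (simp add: rel_int_simplex_def belief_simplex_def)
  qed
  ultimately have "z \<in> belief_simplex" by (simp add: belief_simplex_def)
  moreover have "\<alpha> * w t + (1 - \<alpha>) * z t = \<mu> t" for t using a1 by (simp add: z_def)
  ultimately show ?thesis using that a0 a1 by blast
qed

lemma cvx:
  fixes \<phi> :: "('a::finite \<Rightarrow> real) \<Rightarrow> ('a \<Rightarrow> real) \<Rightarrow> ('a \<Rightarrow> real)"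
    and A :: "('a \<Rightarrow> real) set"
  assumes mu: "\<mu> \<in> rel_int_simplex" and RB: "respects_blackwell \<phi> \<mu>"
    and A: "compact A" "\<And>t. continuous_on A (\<lambda>b. u b t)" "consistent_choice A u a"
    and xa: "xa \<in> belief_simplex" and xb: "xb \<in> belief_simplex" and l: "0 < l" "l < 1"
    and w: "w = (\<lambda>t. l * xa t + (1 - l) * xb t)"
  shows "(\<Sum>t\<in>UNIV. w t * u (a (\<phi> \<mu> w)) t)
     \<le> l * (\<Sum>t\<in>UNIV. xa t * u (a (\<phi> \<mu> xa)) t) + (1 - l) * (\<Sum>t\<in>UNIV. xb t * u (a (\<phi> \<mu> xb)) t)"
proof -
  define W where "W x = (\<Sum>t\<in>UNIV. x t * u (a (\<phi> \<mu> x)) t)" for x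
  have wS: "w \<in> belief_simplex"
  proof -
    have "0 \<le> w t" for t using xa xb l unfolding w belief_simplex_def by (auto intro!: add_nonneg_nonneg)
    moreover have "sum w UNIV = l * sum xa UNIV + (1 - l) * sum xb UNIV"
      unfolding w by (simp add: sum.distrib sum_distrib_left)
    ultimately show ?thesis using xa xb by (simp add: belief_simplex_def)
  qed
  obtain \<alpha> z where al: "0 < \<alpha>" "\<alpha> < 1" and z: "z \<in> belief_simplex"
    and mz: "\<And>t. \<alpha> * w t + (1 - \<alpha>) * z t = \<mu> t"
    using split_mu[OF mu wS] by blast
  define c' where "c' s = (if s = 0 then \<alpha> else 1 - \<alpha>)" for s :: nat
  define x' where "x' s = (if s = 0 then w else z)" for s :: nat
  define c where "c s = (if s = 0 then \<alpha> * l else if s = 1 then 1 - \<alpha> else \<alpha> * (1 - l))" for s :: nat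
  define x where "x s = (if s = 0 then xa else if s = 1 then z else xb)" for s :: nat
  define J where "J s' s = (if s' = 0 \<and> s = 0 then \<alpha> * l else if s' = 0 \<and> s = 2 then \<alpha> * (1 - l)
      else if s' = 1 \<and> s = 1 then 1 - \<alpha> else 0)" for s' s :: nat
  have E': "expc \<mu> c' x' 2"
  proof
    fix s :: nat assume "s < 2" then show "0 < c' s" "x' s \<in> belief_simplex"
      using al z wS by (auto simp: c'_def x'_def)
  next
    fix t show "(\<Sum>s<2. c' s * x' s t) = \<mu> t" using mz[of t] by (simp add: lt2 c'_def x'_def)
  qed (rule mu)
  have E: "expc \<mu> c x 3"
  proof
    fix s :: nat assume "s < 3" then show "0 < c s" "x s \<in> belief_simplex"
      using al z l xa xb by (auto simp: c_def x_def lt3)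
  next
    fix t show "(\<Sum>s<3. c s * x s t) = \<mu> t" using mz[of t] by (simp add: lt3 c_def x_def w algebra_simps)
  qed (rule mu)
  have bg: "blackwell_geq \<mu> (mk_exp \<mu> c x 3) (mk_exp \<mu> c' x' 2)"
  proof (rule garble[OF E E'])
    show "0 \<le> J s' s" for s' s using al l by (auto simp: J_def)
    show "(\<Sum>s'<2. J s' s) = c s" if "s < 3" for s using that by (auto simp: lt2 lt3 J_def c_def)
    show "(\<Sum>s<3. J s' s) = c' s'" if "s' < 2" for s' using that by (auto simp: lt2 lt3 J_def c'_def right_diff_distrib)
    show "(\<Sum>s<3. J s' s * x s t) = c' s' * x' s' t" if "s' < 2" for s' t
      using that by (auto simp: lt2 lt3 J_def c'_def x_def x'_def w algebra_simps)
  qed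
  have ineq: "fexp (bayes_dist \<mu> (mk_exp \<mu> c x 3)) W \<ge> fexp (bayes_dist \<mu> (mk_exp \<mu> c' x' 2)) W"
    unfolding W_def
    by (rule RB[unfolded respects_blackwell_def, rule_format, of A u a])
      (use A bg expc.is_exp[OF E] expc.is_exp[OF E'] in auto)
  then have "\<alpha> * l * W xa + (1 - \<alpha>) * W z + \<alpha> * (1 - l) * W xb \<ge> \<alpha> * W w + (1 - \<alpha>) * W z"
    unfolding expc.fexp_eq[OF E] expc.fexp_eq[OF E'] by (simp add: lt2 lt3 c_def c'_def x_def x'_def)
  then have "\<alpha> * W w \<le> \<alpha> * (l * W xa + (1 - l) * W xb)" by (simp add: algebra_simps)
  then have "W w \<le> l * W xa + (1 - l) * W xb" using al by simp
  then show ?thesis by (simp add: W_def)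
qed



definition lin :: "('a::finite \<Rightarrow> real) \<Rightarrow> ('a \<Rightarrow> real) \<Rightarrow> real" where
  "lin d z = (\<Sum>t\<in>UNIV. z t * d t)"

lemma comb_simplex:
  assumes "xa \<in> belief_simplex" "xb \<in> belief_simplex" "0 \<le> l" "l \<le> 1"
  shows "(\<lambda>t. l * xa t + (1 - l) * xb t) \<in> belief_simplex"
proof -
  have "0 \<le> l * xa t + (1 - l) * xb t" for t using assms by (auto simp: belief_simplex_def)
  moreover have "(\<Sum>t\<in>UNIV. l * xa t + (1 - l) * xb t) = l * sum xa UNIV + (1 - l) * sum xb UNIV"
    by (simp add: sum.distrib sum_distrib_left)
  ultimately show ?thesis using assms by (simp add: belief_simplex_def)
qed

lemma lin_comb: "lin d (\<lambda>t. l * xa t + m * xb t) = l * lin d xa + m * lin d xb"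
  by (simp add: lin_def sum.distrib sum_distrib_left algebra_simps)

lemma ri_simplex: "x \<in> rel_int_simplex \<Longrightarrow> x \<in> belief_simplex"
  by (auto simp: rel_int_simplex_def belief_simplex_def less_imp_le)

locale setting =
  fixes \<phi> :: "('a::finite \<Rightarrow> real) \<Rightarrow> ('a \<Rightarrow> real) \<Rightarrow> ('a \<Rightarrow> real)"
    and \<mu> :: "'a \<Rightarrow> real"
  assumes phiS: "\<And>x. x \<in> belief_simplex \<Longrightarrow> \<phi> \<mu> x \<in> belief_simplex"
    and mu: "\<mu> \<in> rel_int_simplex"
    and RB: "respects_blackwell \<phi> \<mu>"
begin

definition Wd :: "('a \<Rightarrow> real) \<Rightarrow> ('a \<Rightarrow> real) \<Rightarrow> real" where
  "Wd d z = (if lin d (\<phi> \<mu> z) \<ge> 0 then lin d z else 0)"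

lemma cvx2:
  assumes xa: "xa \<in> belief_simplex" and xb: "xb \<in> belief_simplex" and l: "0 < l" "l < 1"
  shows "Wd d (\<lambda>t. l * xa t + (1 - l) * xb t) \<le> l * Wd d xa + (1 - l) * Wd d xb"
proof -
  define a0 :: "'a \<Rightarrow> real" where "a0 = (\<lambda>_. 0)"
  define a1 :: "'a \<Rightarrow> real" where "a1 = (\<lambda>_. 1)"
  define A where "A = {a0, a1}"
  define u where "u b t = b t * d t" for b :: "'a \<Rightarrow> real" and t
  define a where "a y = (if lin d y \<ge> 0 then a1 else a0)" for y
  have cA: "compact A" unfolding A_def by simp
  have cu: "continuous_on A (\<lambda>b. u b t)" for t
    unfolding u_def by (intro continuous_intros continuous_on_subset[OF continuous_on_product_coordinates]) auto
  have cc: "consistent_choice A u a"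
    unfolding consistent_choice_def
  proof (intro ballI conjI)
    fix y :: "'a \<Rightarrow> real" assume "y \<in> belief_simplex"
    show "a y \<in> A" by (simp add: a_def A_def)
    fix b assume "b \<in> A"
    then show "(\<Sum>t\<in>UNIV. y t * u b t) \<le> (\<Sum>t\<in>UNIV. y t * u (a y) t)"
      by (auto simp: A_def a_def u_def a0_def a1_def lin_def)
  qed
  have eq: "(\<Sum>t\<in>UNIV. z t * u (a (\<phi> \<mu> z)) t) = Wd d z" for z
    by (simp add: Wd_def a_def u_def a0_def a1_def lin_def)
  show ?thesis using cvx[OF mu RB cA cu cc xa xb l refl] by (simp add: eq)
qed


lemma kl1:
  assumes x: "x \<in> belief_simplex" and y: "y \<in> rel_int_simplex"
    and fx: "lin d x > 0" and fpx: "lin d (\<phi> \<mu> x) < 0" and fpy: "lin d (\<phi> \<mu> y) \<ge> 0"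
    and fy: "lin d y \<noteq> 0"
  shows False
proof -
  have yS: "y \<in> belief_simplex" using y by (rule ri_simplex)
  have Wx: "Wd d x = 0" using fpx by (simp add: Wd_def)
  have Wy: "Wd d y = lin d y" using fpy by (simp add: Wd_def)
  show False
  proof (cases "lin d y < 0")
    case True
    define l where "l = lin d x / (lin d x - lin d y)"
    have l: "0 < l" "l < 1" using True fx by (auto simp: l_def field_simps)
    define w where "w = (\<lambda>t. l * y t + (1 - l) * x t)"
    have "lin d w = l * lin d y + (1 - l) * lin d x" unfolding w_def by (rule lin_comb)
    also have "\<dots> = 0" using True fx by (simp add: l_def field_simps)
    finally have Ww: "Wd d w = 0" by (simp add: Wd_def)
    have "Wd d w \<le> l * Wd d y + (1 - l) * Wd d x" unfolding w_def by (rule cvx2[OF yS x l])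
    then have "0 \<le> l * lin d y" by (simp add: Ww Wx Wy)
    moreover have "l * lin d y < 0" using l True by (simp add: mult_pos_neg)
    ultimately show False by simp
  next
    case False
    then have fy': "lin d y > 0" using fy by simp
    define e where "e = Min (range y)"
    have epos: "0 < e" unfolding e_def using y by (subst Min_gr_iff) (auto simp: rel_int_simplex_def)
    have ele: "e \<le> y t" for t unfolding e_def by (rule Min_le) auto
    define y' where "y' t = (1 + e) * y t - e * x t" for t
    have y'S: "y' \<in> belief_simplex"
    proof -
      have "0 \<le> y' t" for t
      proof -
        have "e * x t \<le> e * 1" using simplex_le1[OF x, of t] epos by (intro mult_left_mono) auto
        moreover have "0 \<le> e * y t" using epos ele[of t] by simp
        ultimately show ?thesis using ele[of t] unfolding y'_def by (simp add: algebra_simps)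
      qed
      moreover have "sum y' UNIV = (1 + e) * sum y UNIV - e * sum x UNIV"
        by (simp add: y'_def sum_subtractf sum_distrib_left)
      ultimately show ?thesis using x yS by (simp add: belief_simplex_def)
    qed
    define l where "l = e / (1 + e)"
    have l: "0 < l" "l < 1" using epos by (auto simp: l_def)
    have yeq: "y = (\<lambda>t. l * x t + (1 - l) * y' t)"
    proof
      fix t
      have "1 - l = 1 / (1 + e)" using epos by (simp add: l_def field_simps)
      then have "(1 - l) * y' t = y t - l * x t" using epos by (simp add: l_def y'_def field_simps)
      then show "y t = l * x t + (1 - l) * y' t" by simp
    qed
    have ly': "lin d y' = (1 + e) * lin d y - e * lin d x"
      using lin_comb[of d "1 + e" y "- e" x] by (simp add: y'_def[abs_def])
    have "Wd d y \<le> l * Wd d x + (1 - l) * Wd d y'"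
      by (subst yeq, rule cvx2[OF x y'S l])
    then have ineq: "lin d y \<le> (1 - l) * Wd d y'" by (simp add: Wx Wy)
    show False
    proof (cases "lin d (\<phi> \<mu> y') \<ge> 0")
      case True
      then have "lin d y \<le> (1 - l) * ((1 + e) * lin d y - e * lin d x)"
        using ineq by (simp add: Wd_def ly')
      then have "lin d y \<le> lin d y - e / (1 + e) * lin d x"
        using epos by (simp add: l_def field_simps)
      moreover have "0 < e / (1 + e) * lin d x" using epos fx by simp
      ultimately show False by simp
    next
      case False
      then show False using ineq fy' by (simp add: Wd_def)
    qed
  qed
qed

lemma kl2:
  assumes x: "x \<in> belief_simplex" and y: "y \<in> rel_int_simplex"
    and fx: "lin d x > 0" and fpx: "lin d (\<phi> \<mu> x) < 0"
  shows "lin d (\<phi> \<mu> y) < 0"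
proof (rule ccontr)
  assume "\<not> lin d (\<phi> \<mu> y) < 0"
  then have fpy: "lin d (\<phi> \<mu> y) \<ge> 0" by simp
  show False
  proof (cases "lin d y = 0")
    case False
    then show False using kl1[OF x y fx fpx fpy] by simp
  next
    case True
    define \<eta> where "\<eta> = - lin d (\<phi> \<mu> x) / 2"
    have eta: "0 < \<eta>" using fpx by (simp add: \<eta>_def)
    define d' where "d' t = d t + \<eta>" for t
    have ld: "lin d' z = lin d z + \<eta>" if "z \<in> belief_simplex" for z
    proof -
      have "lin d' z = lin d z + \<eta> * sum z UNIV"
        by (simp add: lin_def d'_def algebra_simps sum.distrib sum_distrib_left)
      then show ?thesis using that by (simp add: belief_simplex_def)
    qed
    have yS: "y \<in> belief_simplex" using y by (rule ri_simplex)
    show False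
      by (rule kl1[OF x y, of d'])
        (use ld[OF x] ld[OF phiS[OF x]] ld[OF phiS[OF yS]] ld[OF yS] fx fpx fpy eta True
          in \<open>auto simp: \<eta>_def\<close>)
  qed
qed


lemma lin_dd:
  "lin (\<lambda>t. (if t = r then \<alpha> else 0) + (if t = s then \<beta> else 0)) z = z r * \<alpha> + z s * \<beta>"
proof -
  have "lin (\<lambda>t. (if t = r then \<alpha> else 0) + (if t = s then \<beta> else 0)) z
      = (\<Sum>t\<in>UNIV. (if t = r then z t * \<alpha> else 0) + (if t = s then z t * \<beta> else 0))"
    unfolding lin_def by (intro sum.cong refl) (auto simp: distrib_left)
  also have "\<dots> = z r * \<alpha> + z s * \<beta>" by (simp add: sum.distrib)
  finally show ?thesis .
qed

lemma lin_shift: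
  assumes "z \<in> belief_simplex"
  shows "lin (\<lambda>t. dd t - k) z = lin dd z - k"
proof -
  have "lin (\<lambda>t. dd t - k) z = lin dd z - k * sum z UNIV"
    by (simp add: lin_def algebra_simps sum_subtractf sum_distrib_left)
  then show ?thesis using assms by (simp add: belief_simplex_def)
qed

lemma arith2:
  fixes vr vs wr ws :: real
  assumes "vr * ws - vs * wr \<noteq> 0"
  shows "vr * ((ws - vs) / (vr * ws - vs * wr)) + vs * ((vr - wr) / (vr * ws - vs * wr)) = 1"
    and "wr * ((ws - vs) / (vr * ws - vs * wr)) + ws * ((vr - wr) / (vr * ws - vs * wr)) = 1"
proof -
  let ?D = "vr * ws - vs * wr"
  have "vr * ((ws - vs) / ?D) + vs * ((vr - wr) / ?D) = (vr * (ws - vs) + vs * (vr - wr)) / ?D"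
    by (simp add: add_divide_distrib)
  also have "vr * (ws - vs) + vs * (vr - wr) = ?D" by (simp add: algebra_simps)
  finally show "vr * ((ws - vs) / ?D) + vs * ((vr - wr) / ?D) = 1" using assms by simp
  have "wr * ((ws - vs) / ?D) + ws * ((vr - wr) / ?D) = (wr * (ws - vs) + ws * (vr - wr)) / ?D"
    by (simp add: add_divide_distrib)
  also have "wr * (ws - vs) + ws * (vr - wr) = ?D" by (simp add: algebra_simps)
  finally show "wr * ((ws - vs) / ?D) + ws * ((vr - wr) / ?D) = 1" using assms by simp
qed

lemma fact:
  assumes x: "x \<in> belief_simplex" and y: "y \<in> rel_int_simplex"
  shows "(\<phi> \<mu> y s - \<phi> \<mu> x s) * (x r - \<phi> \<mu> x r) = (\<phi> \<mu> y r - \<phi> \<mu> x r) * (x s - \<phi> \<mu> x s)"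
proof (rule ccontr)
  define p where "p = \<phi> \<mu> x"
  define q where "q = \<phi> \<mu> y"
  assume "\<not> ?thesis"
  then have D: "(x r - p r) * (q s - p s) - (x s - p s) * (q r - p r) \<noteq> 0"
    by (simp add: p_def q_def algebra_simps)
  define vr vs wr ws where "vr = x r - p r" and "vs = x s - p s" and "wr = q r - p r" and "ws = q s - p s"
  define D' where "D' = vr * ws - vs * wr"
  have D'0: "D' \<noteq> 0" using D by (simp add: D'_def vr_def vs_def wr_def ws_def)
  define \<alpha> where "\<alpha> = (ws - vs) / D'"
  define \<beta> where "\<beta> = (vr - wr) / D'"
  define dd where "dd t = (if t = r then \<alpha> else 0) + (if t = s then \<beta> else 0)" for t
  define k where "k = lin dd p + 1/2"
  define d' where "d' t = dd t - k" for t
  have yS: "y \<in> belief_simplex" using y by (rule ri_simplex)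
  have pS: "p \<in> belief_simplex" using phiS[OF x] by (simp add: p_def)
  have qS: "q \<in> belief_simplex" using phiS[OF yS] by (simp add: q_def)
  have ldd: "lin dd z = z r * \<alpha> + z s * \<beta>" for z unfolding dd_def by (rule lin_dd)
  have a1: "vr * \<alpha> + vs * \<beta> = 1" "wr * \<alpha> + ws * \<beta> = 1"
    using arith2[OF D'0[unfolded D'_def]] by (simp_all add: \<alpha>_def \<beta>_def D'_def)
  have lx: "lin d' x = 1/2"
    unfolding d'_def lin_shift[OF x] using a1(1) by (simp add: ldd k_def vr_def vs_def algebra_simps)
  have lp: "lin d' p = - 1/2"
    unfolding d'_def lin_shift[OF pS] by (simp add: k_def)
  have lq: "lin d' q = 1/2"
    unfolding d'_def lin_shift[OF qS] using a1(2) by (simp add: ldd k_def wr_def ws_def algebra_simps)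
  have "lin d' (\<phi> \<mu> y) < 0"
    by (rule kl2[OF x y]) (use lx lp in \<open>simp_all add: p_def\<close>)
  then show False using lq by (simp add: q_def)
qed


lemma par:
  fixes v w :: "'a \<Rightarrow> real"
  assumes "v r0 \<noteq> 0" "\<And>r s. w s * v r = w r * v s"
  shows "\<exists>c. \<forall>s. w s = c * v s"
proof (intro exI allI)
  fix s
  have "w s * v r0 = w r0 * v s" by (rule assms(2))
  then show "w s = w r0 / v r0 * v s" using assms(1) by (simp add: field_simps)
qed

lemma par2:
  assumes x: "x \<in> belief_simplex" and nx: "\<phi> \<mu> x r0 \<noteq> x r0"
  shows "\<forall>y\<in>rel_int_simplex. \<exists>c. \<forall>s. \<phi> \<mu> y s - \<phi> \<mu> x s = c * (x s - \<phi> \<mu> x s)"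
proof
  fix y :: "'a \<Rightarrow> real" assume y: "y \<in> rel_int_simplex"
  show "\<exists>c. \<forall>s. \<phi> \<mu> y s - \<phi> \<mu> x s = c * (x s - \<phi> \<mu> x s)"
    by (rule par[of "\<lambda>s. x s - \<phi> \<mu> x s" r0]) (use nx fact[OF x y] in auto)
qed

end

lemma three:
  assumes "CARD('a) \<ge> 3"
  obtains a b c :: "'a::finite" where "a \<noteq> b" "a \<noteq> c" "b \<noteq> c"
proof -
  have "Suc 2 \<le> card (UNIV :: 'a set)" using assms by simp
  then obtain a B where B: "(UNIV :: 'a set) = insert a B" "a \<notin> B" "2 \<le> card B" "finite B"
    unfolding card_le_Suc_iff by blast
  then have "Suc 1 \<le> card B" by simp
  then obtain b C where C: "B = insert b C" "b \<notin> C" "1 \<le> card C" "finite C"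
    unfolding card_le_Suc_iff by blast
  then have "C \<noteq> {}" by auto
  then obtain c where "c \<in> C" by auto
  then have "a \<noteq> b" "a \<noteq> c" "b \<noteq> c" using B C by auto
  then show ?thesis by (rule that)
qed

lemma gen:
  fixes x0 p v :: "'a::finite \<Rightarrow> real"
  assumes card: "CARD('a) \<ge> 3" and x0: "x0 \<in> rel_int_simplex"
  shows "\<exists>z\<in>rel_int_simplex. \<not> (\<exists>m. \<forall>t. z t - p t = m * v t)"
proof (rule ccontr)
  assume H: "\<not> ?thesis"
  obtain a b c :: 'a where abc: "a \<noteq> b" "a \<noteq> c" "b \<noteq> c" using three[OF card] by blast
  define \<epsilon> where "\<epsilon> = Min (range x0) / 2"
  have mpos: "0 < Min (range x0)" using x0 by (subst Min_gr_iff) (auto simp: rel_int_simplex_def)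
  have mle: "Min (range x0) \<le> x0 t" for t by (rule Min_le) auto
  have ep: "0 < \<epsilon>" "\<epsilon> < x0 t" for t
  proof -
    show "0 < \<epsilon>" using mpos by (simp add: \<epsilon>_def)
    show "\<epsilon> < x0 t" using mpos mle[of t] unfolding \<epsilon>_def by linarith
  qed
  define z where "z q t = x0 t + (if t = a then \<epsilon> else 0) - (if t = q then \<epsilon> else 0)" for q t
  have zri: "z q \<in> rel_int_simplex" for q
  proof -
    have "0 < z q t" for t using ep(1) ep(2)[of t] by (auto simp: z_def)
    moreover have "sum (z q) UNIV = sum x0 UNIV + \<epsilon> - \<epsilon>"
      by (simp add: z_def sum.distrib sum_subtractf)
    ultimately show ?thesis using x0 by (simp add: rel_int_simplex_def)
  qed
  obtain m0 where m0: "\<And>t. x0 t - p t = m0 * v t" using H x0 by blast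
  obtain m1 where m1: "\<And>t. z b t - p t = m1 * v t" using H zri[of b] by blast
  obtain m2 where m2: "\<And>t. z c t - p t = m2 * v t" using H zri[of c] by blast
  have e1: "- \<epsilon> = (m1 - m0) * v b" using m1[of b] m0[of b] abc by (simp add: z_def algebra_simps)
  have e2: "0 = (m2 - m0) * v b" using m2[of b] m0[of b] abc by (simp add: z_def algebra_simps)
  have e3: "- \<epsilon> = (m2 - m0) * v c" using m2[of c] m0[of c] abc by (simp add: z_def algebra_simps)
  have "v b \<noteq> 0" using e1 ep(1) by auto
  then have "m2 = m0" using e2 by simp
  then show False using e3 ep(1) by simp
qed

context setting begin

theorem main:
  assumes card: "CARD('a) \<ge> 3"
  shows "(\<forall>x\<in>belief_simplex. \<phi> \<mu> x = x) \<or> (\<exists>c. \<forall>x\<in>rel_int_simplex. \<phi> \<mu> x = c)"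
proof (cases "\<forall>x\<in>belief_simplex. \<phi> \<mu> x = x")
  case True then show ?thesis by simp
next
  case False
  then obtain x where x: "x \<in> belief_simplex" and nx: "\<phi> \<mu> x \<noteq> x" by blast
  then obtain r0 where r0: "\<phi> \<mu> x r0 \<noteq> x r0" by auto
  define p where "p = \<phi> \<mu> x"
  define v where "v s = x s - p s" for s
  have v0: "v r0 \<noteq> 0" using r0 by (simp add: v_def p_def)
  have H1: "\<forall>y\<in>rel_int_simplex. \<exists>c. \<forall>s. \<phi> \<mu> y s - p s = c * v s"
    using par2[OF x r0] by (simp add: p_def v_def)
  obtain z where z: "z \<in> rel_int_simplex" and nz: "\<not> (\<exists>m. \<forall>t. z t - p t = m * v t)"
    using gen[OF card mu] by blast
  have zS: "z \<in> belief_simplex" using z by (rule ri_simplex)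
  obtain cz where cz: "\<And>s. \<phi> \<mu> z s - p s = cz * v s" using H1 z by blast
  have "\<phi> \<mu> z \<noteq> z"
  proof
    assume "\<phi> \<mu> z = z"
    then have "\<forall>t. z t - p t = cz * v t" using cz by metis
    then show False using nz by blast
  qed
  then obtain r1 where r1: "\<phi> \<mu> z r1 \<noteq> z r1" by auto
  have H2: "\<forall>y\<in>rel_int_simplex. \<exists>e. \<forall>s. \<phi> \<mu> y s - \<phi> \<mu> z s = e * (z s - \<phi> \<mu> z s)"
    by (rule par2[OF zS r1])
  have "\<phi> \<mu> y = \<phi> \<mu> \<mu>" if y: "y \<in> rel_int_simplex" for y
  proof -
    obtain c1 where c1: "\<And>s. \<phi> \<mu> y s - p s = c1 * v s" using H1 y by blast
    obtain c2 where c2: "\<And>s. \<phi> \<mu> \<mu> s - p s = c2 * v s" using H1 mu by blast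
    obtain e1 where e1: "\<And>s. \<phi> \<mu> y s - \<phi> \<mu> z s = e1 * (z s - \<phi> \<mu> z s)" using H2 y by blast
    obtain e2 where e2: "\<And>s. \<phi> \<mu> \<mu> s - \<phi> \<mu> z s = e2 * (z s - \<phi> \<mu> z s)" using H2 mu by blast
    have key: "(c1 - c2) * v s = (e1 - e2) * (z s - \<phi> \<mu> z s)" for s
      using c1[of s] c2[of s] e1[of s] e2[of s] by (simp add: algebra_simps)
    show ?thesis
    proof (cases "c1 = c2")
      case True
      show ?thesis
      proof
        fix s show "\<phi> \<mu> y s = \<phi> \<mu> \<mu> s" using c1[of s] c2[of s] True by simp
      qed
    next
      case False
      have "e1 \<noteq> e2"
      proof
        assume "e1 = e2"
        then have "(c1 - c2) * v r0 = 0" using key[of r0] by simp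
        then show False using False v0 by simp
      qed
      then have "z s - \<phi> \<mu> z s = (c1 - c2) / (e1 - e2) * v s" for s
        using key[of s] by (simp add: field_simps)
      then have "\<forall>t. z t - p t = ((c1 - c2) / (e1 - e2) + cz) * v t"
        using cz by (simp add: algebra_simps)
      then show ?thesis using nz by blast
    qed
  qed
  then show ?thesis by blast
qed

end


theorem corollary1:
  fixes \<phi> :: "('a::finite \<Rightarrow> real) \<Rightarrow> ('a \<Rightarrow> real) \<Rightarrow> ('a \<Rightarrow> real)"
    and \<mu> :: "'a \<Rightarrow> real"
  assumes "CARD('a) \<ge> 3"
    and "\<And>x. x \<in> belief_simplex \<Longrightarrow> \<phi> \<mu> x \<in> belief_simplex"
    and "\<mu> \<in> rel_int_simplex"
    and "respects_blackwell \<phi> \<mu>"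
  shows "(\<forall>x\<in>belief_simplex. \<phi> \<mu> x = x) \<or> (\<exists>c. \<forall>x\<in>rel_int_simplex. \<phi> \<mu> x = c)"
proof -
  interpret setting \<phi> \<mu> by (unfold_locales) (use assms in auto)
  show ?thesis by (rule main[OF assms(1)])
qed

end
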